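(* Let $\mathbf a=(a_1,\dots,a_k)$ be a sequence of nonnegative integers and $1\le \ell\le k$. There is a bijection between $D(a_1,\dots,a_k)$ and $\hat D_\ell(a_1,\dots,a_{\ell-1},a_\ell+1,a_{\ell+1},\dots,a_k)$.
   Context: For $\mathbf a=(a_1,\dots,a_k)$ with nonnegative integer entries summing to $n$, put $c_0=0$, $c_j=a_1+\dots+a_j$, and let the $j$-th block be $A_j=\{c_{j-1}+1,\dots,c_j\}$. Let $S_{\mathbf a}\subseteq S_n$ be the set of permutations $\pi$ of $[n]$ with $\pi_i>\pi_{i+1}$ whenever $i,i+1$ lie in the same block. A fixed point is an $i$ with $\pi_i=i$. $D(\mathbf a)$ is the set of derangements in $S_{\mathbf a}$, and $\hat D_\ell(\mathbf a)$ is the set of permutations in $S_{\mathbf a}$ that have a fixed point in $A_\ell$ but no fixed point in any other block. *)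

theory Defs
  imports "HOL-Combinatorics.Permutations"
begin

text \<open>Compositions are lists a = [a_1,...,a_k] of naturals; blocks are indexed 1..k.
  c_j = a_1 + ... + a_j, block j is {c_(j-1)+1 .. c_j}.\<close>

definition psum :: "nat list \<Rightarrow> nat \<Rightarrow> nat" where
  "psum a j = sum_list (take j a)"

definition block :: "nat list \<Rightarrow> nat \<Rightarrow> nat set" where
  "block a j = {psum a (j - 1) + 1 .. psum a j}"

definition Sa :: "nat list \<Rightarrow> (nat \<Rightarrow> nat) set" where
  "Sa a = {\<pi>. \<pi> permutes {1..sum_list a} \<and>
     (\<forall>j \<in> {1..length a}. \<forall>i. i \<in> block a j \<and> i + 1 \<in> block a j \<longrightarrow> \<pi> i > \<pi> (i + 1))}"

definition Der :: "nat list \<Rightarrow> (nat \<Rightarrow> nat) set" where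
  "Der a = {\<pi> \<in> Sa a. \<forall>i \<in> {1..sum_list a}. \<pi> i \<noteq> i}"

definition Dhat :: "nat \<Rightarrow> nat list \<Rightarrow> (nat \<Rightarrow> nat) set" where
  "Dhat l a = {\<pi> \<in> Sa a. (\<exists>i \<in> block a l. \<pi> i = i) \<and>
     (\<forall>j \<in> {1..length a}. j \<noteq> l \<longrightarrow> (\<forall>i \<in> block a j. \<pi> i \<noteq> i))}"

end

theory Submission
  imports Defs
begin

definition insp :: "nat \<Rightarrow> nat \<Rightarrow> nat" where
  "insp p i = (if i < p then i else i + 1)"
definition stp :: "nat \<Rightarrow> nat \<Rightarrow> nat" where
  "stp p v = (if v < p then v else v - 1)"
definition delmap :: "nat \<Rightarrow> nat \<Rightarrow> (nat \<Rightarrow> nat) \<Rightarrow> nat \<Rightarrow> nat" where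
  "delmap n p \<pi> = (\<lambda>i. if i \<in> {1..n} then stp p (\<pi> (insp p i)) else i)"
definition insmap :: "nat \<Rightarrow> nat \<Rightarrow> (nat \<Rightarrow> nat) \<Rightarrow> nat \<Rightarrow> nat" where
  "insmap n p \<sigma> = (\<lambda>i. if i = p then p else if i \<in> {1..n+1} then insp p (\<sigma> (stp p i)) else i)"
definition dec :: "(nat \<Rightarrow> nat) \<Rightarrow> nat set \<Rightarrow> bool" where
  "dec f S = (\<forall>x\<in>S. \<forall>y\<in>S. x < y \<longrightarrow> f y < f x)"

lemma stp_insp[simp]: "stp p (insp p i) = i" by (simp add: stp_def insp_def)
lemma insp_stp[simp]: "v \<noteq> p \<Longrightarrow> insp p (stp p v) = v" by (auto simp add: stp_def insp_def)
lemma insp_neq[simp]: "insp p i \<noteq> p" by (simp add: insp_def)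
lemma insp_neq'[simp]: "p \<noteq> insp p i" by (simp add: insp_def)
lemma insp_less[simp]: "insp p i < insp p j \<longleftrightarrow> i < j" by (simp add: insp_def)
lemma insp_eq[simp]: "insp p i = insp p j \<longleftrightarrow> i = j" by (auto simp add: insp_def)
lemma stp_less: "v \<noteq> p \<Longrightarrow> w \<noteq> p \<Longrightarrow> stp p v < stp p w \<longleftrightarrow> v < w" by (auto simp add: stp_def)
lemma stp_eq: "v \<noteq> p \<Longrightarrow> w \<noteq> p \<Longrightarrow> stp p v = stp p w \<longleftrightarrow> v = w" by (auto simp add: stp_def)

lemma decD: "dec f S \<Longrightarrow> x \<in> S \<Longrightarrow> y \<in> S \<Longrightarrow> x < y \<Longrightarrow> f y < f x"
  unfolding dec_def by blast

lemma adj_dec: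
  assumes A: "\<And>i. i \<in> {u..v::nat} \<Longrightarrow> i+1 \<in> {u..v} \<Longrightarrow> f (i+1) < f i"
  shows "dec f {u..v}"
proof -
  have *: "u \<le> x \<longrightarrow> x + Suc k \<le> v \<longrightarrow> f (x + Suc k) < f x" for x k
  proof (induction k)
    case 0
    show ?case
    proof (intro impI)
      assume "u \<le> x" "x + Suc 0 \<le> v"
      then have "x \<in> {u..v}" "x + 1 \<in> {u..v}" by simp_all
      from A[OF this] show "f (x + Suc 0) < f x" by simp
    qed
  next
    case (Suc k)
    show ?case
    proof (intro impI)
      assume h: "u \<le> x" "x + Suc (Suc k) \<le> v"
      then have "x + Suc k \<in> {u..v}" "x + Suc k + 1 \<in> {u..v}" by simp_all
      from A[OF this] have "f (x + Suc (Suc k)) < f (x + Suc k)" by simp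
      also have "\<dots> < f x" using Suc.IH h by simp
      finally show "f (x + Suc (Suc k)) < f x" .
    qed
  qed
  show ?thesis unfolding dec_def
  proof (intro ballI impI)
    fix x y assume xy: "x \<in> {u..v}" "y \<in> {u..v}" "x < y"
    obtain k0 where "y = Suc (x + k0)" using less_imp_Suc_add[OF xy(3)] by blast
    then have k: "y = x + Suc k0" by simp
    define k where "k = k0"
    note k = k[folded k_def]
    have "u \<le> x" "x + Suc k \<le> v" using xy k by simp_all
    then show "f y < f x" using *[of x k] k by simp
  qed
qed

lemma Sa_alt: "\<pi> \<in> Sa a \<longleftrightarrow> \<pi> permutes {1..sum_list a} \<and> (\<forall>j\<in>{1..length a}. dec \<pi> (block a j))"
proof -
  have eq: "(\<forall>i. i \<in> block a j \<and> i + 1 \<in> block a j \<longrightarrow> \<pi> i > \<pi> (i + 1)) \<longleftrightarrow> dec \<pi> (block a j)" for j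
  proof
    assume h: "\<forall>i. i \<in> block a j \<and> i + 1 \<in> block a j \<longrightarrow> \<pi> i > \<pi> (i + 1)"
    show "dec \<pi> (block a j)" unfolding block_def
    proof (rule adj_dec)
      fix i assume "i \<in> {psum a (j - 1) + 1..psum a j}" "i + 1 \<in> {psum a (j - 1) + 1..psum a j}"
      then show "\<pi> (i + 1) < \<pi> i" using h unfolding block_def by blast
    qed
  next
    assume h: "dec \<pi> (block a j)"
    show "\<forall>i. i \<in> block a j \<and> i + 1 \<in> block a j \<longrightarrow> \<pi> i > \<pi> (i + 1)"
    proof (intro allI impI)
      fix i assume "i \<in> block a j \<and> i + 1 \<in> block a j"
      then show "\<pi> i > \<pi> (i + 1)" using decD[OF h] by simp
    qed
  qed
  have "\<pi> \<in> Sa a \<longleftrightarrow> \<pi> permutes {1..sum_list a} \<and>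
     (\<forall>j \<in> {1..length a}. \<forall>i. i \<in> block a j \<and> i + 1 \<in> block a j \<longrightarrow> \<pi> i > \<pi> (i + 1))"
    unfolding Sa_def by (rule mem_Collect_eq)
  then show ?thesis using eq by simp
qed


lemma dec_mono: "S \<subseteq> T \<Longrightarrow> dec f T \<Longrightarrow> dec f S" by (auto simp: dec_def)

lemma stp_range: "v \<in> {1..n+1} \<Longrightarrow> v \<noteq> p \<Longrightarrow> p \<in> {1..n+1} \<Longrightarrow> stp p v \<in> {1..n}"
  unfolding stp_def by auto

lemma insp_range: "i \<in> {1..n} \<Longrightarrow> insp p i \<in> {1..n+1}"
  unfolding insp_def by auto

lemma inj_ne: "inj \<pi> \<Longrightarrow> \<pi> p = p \<Longrightarrow> x \<noteq> p \<Longrightarrow> \<pi> x \<noteq> p"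
  by (metis injD)

lemma del_permutes:
  assumes "\<pi> permutes {1..n+1}" "\<pi> p = p" "p \<in> {1..n+1}"
  shows "delmap n p \<pi> permutes {1..n}"
proof (rule bij_imp_permutes)
  have inj: "inj \<pi>" using assms(1) by (rule permutes_inj)
  have ne: "\<pi> (insp p i) \<noteq> p" for i
  proof
    assume "\<pi> (insp p i) = p"
    then have "\<pi> (insp p i) = \<pi> p" using assms(2) by simp
    then have "insp p i = p" by (rule injD[OF inj])
    then show False by simp
  qed
  have img: "\<pi> (insp p i) \<in> {1..n+1}" if "i \<in> {1..n}" for i
    using permutes_in_image[OF assms(1)] insp_range[OF that] by blast
  have sub: "delmap n p \<pi> ` {1..n} \<subseteq> {1..n}"
  proof
    fix y assume "y \<in> delmap n p \<pi> ` {1..n}"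
    then obtain i where i: "i \<in> {1..n}" "y = delmap n p \<pi> i" by blast
    then have "y = stp p (\<pi> (insp p i))" by (simp add: delmap_def)
    moreover have "stp p (\<pi> (insp p i)) \<in> {1..n}"
      using stp_range[OF img[OF i(1)] ne assms(3)] .
    ultimately show "y \<in> {1..n}" by simp
  qed
  have "inj_on (delmap n p \<pi>) {1..n}"
  proof (rule inj_onI)
    fix x y assume "x \<in> {1..n}" "y \<in> {1..n}" "delmap n p \<pi> x = delmap n p \<pi> y"
    then have "stp p (\<pi> (insp p x)) = stp p (\<pi> (insp p y))" by (simp add: delmap_def)
    then have "\<pi> (insp p x) = \<pi> (insp p y)" using stp_eq ne by blast
    then have "insp p x = insp p y" by (rule injD[OF inj])
    then show "x = y" by simp
  qed
  with sub show "bij_betw (delmap n p \<pi>) {1..n} {1..n}"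
    unfolding bij_betw_def using endo_inj_surj[of "{1..n}"] by blast
  show "delmap n p \<pi> x = x" if "x \<notin> {1..n}" for x
  proof -
    have "delmap n p \<pi> x = (if x \<in> {1..n} then stp p (\<pi> (insp p x)) else x)"
      unfolding delmap_def by (rule refl)
    also have "\<dots> = x" by (rule if_not_P[OF that])
    finally show ?thesis .
  qed
qed

lemma ins_permutes:
  assumes "\<sigma> permutes {1..n}" "p \<in> {1..n+1}"
  shows "insmap n p \<sigma> permutes {1..n+1}"
proof (rule bij_imp_permutes)
  have inj: "inj \<sigma>" using assms(1) by (rule permutes_inj)
  have ev: "insmap n p \<sigma> i = insp p (\<sigma> (stp p i))" if "i \<in> {1..n+1}" "i \<noteq> p" for i
    using that unfolding insmap_def by simp
  have sub: "insmap n p \<sigma> ` {1..n+1} \<subseteq> {1..n+1}"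
  proof
    fix y assume "y \<in> insmap n p \<sigma> ` {1..n+1}"
    then obtain i where i: "i \<in> {1..n+1}" "y = insmap n p \<sigma> i" by blast
    show "y \<in> {1..n+1}"
    proof (cases "i = p")
      case True then show ?thesis using i assms(2) by (simp add: insmap_def)
    next
      case False
      have "stp p i \<in> {1..n}" using stp_range[OF i(1) False assms(2)] .
      then have "\<sigma> (stp p i) \<in> {1..n}" using permutes_in_image[OF assms(1)] by blast
      then have "insp p (\<sigma> (stp p i)) \<in> {1..n+1}" by (rule insp_range)
      then show ?thesis using i ev[OF i(1) False] by simp
    qed
  qed
  have "inj_on (insmap n p \<sigma>) {1..n+1}"
  proof (rule inj_onI)
    fix x y assume xy: "x \<in> {1..n+1}" "y \<in> {1..n+1}" "insmap n p \<sigma> x = insmap n p \<sigma> y"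
    show "x = y"
    proof (cases "x = p")
      case True
      show ?thesis
      proof (rule ccontr)
        assume "x \<noteq> y"
        then have "y \<noteq> p" using True by simp
        then show False using xy True ev[OF xy(2)] by (simp add: insmap_def)
      qed
    next
      case xn: False
      show ?thesis
      proof (cases "y = p")
        case True
        then show ?thesis using xy xn ev[OF xy(1) xn] by (simp add: insmap_def)
      next
        case yn: False
        have "insp p (\<sigma> (stp p x)) = insp p (\<sigma> (stp p y))" using xy ev xn yn by simp
        then have "\<sigma> (stp p x) = \<sigma> (stp p y)" by simp
        then have "stp p x = stp p y" by (rule injD[OF inj])
        then show ?thesis using xn yn stp_eq by blast
      qed
    qed
  qed
  with sub show "bij_betw (insmap n p \<sigma>) {1..n+1} {1..n+1}"
    unfolding bij_betw_def using endo_inj_surj[of "{1..n+1}"] by blast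
  show "x \<notin> {1..n+1} \<Longrightarrow> insmap n p \<sigma> x = x" for x using assms(2) unfolding insmap_def by auto
qed

lemma insmap_insp: "x \<in> {1..n} \<Longrightarrow> insmap n p \<sigma> (insp p x) = insp p (\<sigma> x)"
proof -
  assume "x \<in> {1..n}"
  then have "insp p x \<in> {1..n+1}" by (auto simp: insp_def)
  then show ?thesis unfolding insmap_def by simp
qed

lemma del_ins: "\<sigma> permutes {1..n} \<Longrightarrow> delmap n p (insmap n p \<sigma>) = \<sigma>"
proof
  fix i assume "\<sigma> permutes {1..n}"
  then show "delmap n p (insmap n p \<sigma>) i = \<sigma> i"
    by (cases "i \<in> {1..n}") (simp_all add: delmap_def insmap_insp permutes_not_in del: atLeastAtMost_iff)
qed

lemma ins_del:
  assumes "\<pi> permutes {1..n+1}" "\<pi> p = p" "p \<in> {1..n+1}"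
  shows "insmap n p (delmap n p \<pi>) = \<pi>"
proof
  fix i
  have inj: "inj \<pi>" using assms permutes_inj by blast
  show "insmap n p (delmap n p \<pi>) i = \<pi> i"
  proof (cases "i = p")
    case True then show ?thesis using assms by (simp add: insmap_def)
  next
    case False
    show ?thesis
    proof (cases "i \<in> {1..n+1}")
      case True
      have s: "stp p i \<in> {1..n}" using False True assms(3) by (auto simp: stp_def)
      have "\<pi> i \<noteq> p" using inj_ne[OF inj assms(2) False] .
      then show ?thesis using s False True by (simp add: insmap_def delmap_def)
    next
      case F: False
      then show ?thesis using False assms permutes_not_in by (fastforce simp: insmap_def)
    qed
  qed
qed

lemma dec_del:
  assumes "dec \<pi> (insp p ` B)" "inj \<pi>" "\<pi> p = p" "B \<subseteq> {1..n}"
  shows "dec (delmap n p \<pi>) B"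
  unfolding dec_def
proof (intro ballI impI)
  fix x y assume xy: "x \<in> B" "y \<in> B" "x < y"
  have ne: "\<pi> (insp p i) \<noteq> p" for i using inj_ne[OF assms(2,3)] by simp
  have "\<pi> (insp p y) < \<pi> (insp p x)" by (rule decD[OF assms(1)]) (auto simp: xy)
  then show "delmap n p \<pi> y < delmap n p \<pi> x"
    using xy assms(4) ne stp_less by (auto simp: delmap_def)
qed

lemma dec_ins:
  assumes "dec \<sigma> B" "B \<subseteq> {1..n}"
  shows "dec (insmap n p \<sigma>) (insp p ` B)"
  unfolding dec_def
proof (intro ballI impI)
  fix x y assume "x \<in> insp p ` B" "y \<in> insp p ` B" "x < y"
  then obtain x' y' where xy: "x' \<in> B" "y' \<in> B" "x = insp p x'" "y = insp p y'" "x' < y'" by auto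
  then have "x' \<in> {1..n}" "y' \<in> {1..n}" using assms(2) by auto
  then have "insmap n p \<sigma> x = insp p (\<sigma> x')" "insmap n p \<sigma> y = insp p (\<sigma> y')"
    using xy insmap_insp by auto
  moreover have "\<sigma> y' < \<sigma> x'" using decD[OF assms(1)] xy by blast
  ultimately show "insmap n p \<sigma> y < insmap n p \<sigma> x" by simp
qed

lemma psum_le_sum: "psum a j \<le> sum_list a"
  unfolding psum_def using sum_list_append[of "take j a" "drop j a"] by simp

lemma psum_mono: "i \<le> j \<Longrightarrow> psum a i \<le> psum a j"
proof -
  assume "i \<le> j"
  then obtain k where "j = i + k" using le_Suc_ex by blast
  then show ?thesis by (simp add: psum_def take_add)
qed

lemma psum_len: "psum a (length a) = sum_list a" by (simp add: psum_def)

lemma block_sub: "block a j \<subseteq> {1..sum_list a}"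
  using psum_le_sum[of a j] by (auto simp: block_def)

lemma block_cover:
  assumes "i \<in> {1..sum_list a}"
  shows "\<exists>j\<in>{1..length a}. i \<in> block a j"
proof -
  define j where "j = (LEAST j. i \<le> psum a j)"
  have ex: "i \<le> psum a (length a)" using assms psum_len by auto
  have j1: "i \<le> psum a j" unfolding j_def by (rule LeastI[of "\<lambda>j. i \<le> psum a j", OF ex])
  have j2: "j \<le> length a" unfolding j_def by (rule Least_le[of "\<lambda>j. i \<le> psum a j", OF ex])
  have j0: "j \<ge> 1" using j1 assms by (cases j) (auto simp: psum_def)
  have "\<not> i \<le> psum a (j - 1)" unfolding j_def
    by (rule not_less_Least) (use j0 in \<open>simp add: j_def[symmetric]\<close>)
  then show ?thesis using j0 j1 j2 by (intro bexI[of _ j]) (auto simp: block_def)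
qed

lemma psum_upd:
  assumes "1 \<le> l" "l \<le> length a"
  shows "psum (a[l - 1 := a ! (l - 1) + 1]) j = (if j < l then psum a j else psum a j + 1)"
proof (cases "j < l")
  case True then show ?thesis by (simp add: psum_def)
next
  case False
  have lt: "l - 1 < length (take j a)" using False assms by auto
  have "psum (a[l - 1 := a ! (l - 1) + 1]) j = sum_list ((take j a)[l - 1 := a ! (l - 1) + 1])"
    by (simp add: psum_def take_update_swap)
  also have "\<dots> = sum_list (take j a) + (a ! (l - 1) + 1) - take j a ! (l - 1)"
    by (rule sum_list_update[OF lt])
  also have "\<dots> = psum a j + 1" using lt False by (simp add: psum_def)
  finally show ?thesis using False by simp
qed

lemma psum_l:
  assumes "1 \<le> l" "l \<le> length a"
  shows "psum a l = psum a (l - 1) + a ! (l - 1)"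
proof -
  have "take l a = take (l - 1) a @ [a ! (l - 1)]"
    using assms take_Suc_conv_app_nth[of "l - 1" a] by simp
  then show ?thesis by (simp add: psum_def)
qed

context
  fixes a :: "nat list" and l :: nat
  assumes l1: "1 \<le> l" and l2: "l \<le> length a"
begin

definition "a' = a[l - 1 := a ! (l - 1) + 1]"
definition "nn = sum_list a"
definition "cc = psum a (l - 1)"
definition "mm = a ! (l - 1)"
definition "good \<sigma> p \<longleftrightarrow> p \<in> {cc+1..cc+mm+1} \<and>
   (\<forall>i\<in>{cc+1..cc+mm}. (i < p \<longrightarrow> p \<le> \<sigma> i) \<and> (p \<le> i \<longrightarrow> \<sigma> i < p))"

lemma sum_a': "sum_list a' = nn + 1"
  using l1 l2 sum_list_update[of "l - 1" a] by (simp add: a'_def nn_def)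

lemma len_a': "length a' = length a" by (simp add: a'_def)

lemma psum'_lt: "j < l \<Longrightarrow> psum a' j = psum a j"
  using psum_upd[OF l1 l2, of j] by (simp add: a'_def)
lemma psum'_ge: "\<not> j < l \<Longrightarrow> psum a' j = psum a j + 1"
  using psum_upd[OF l1 l2, of j] by (simp add: a'_def)

lemma pl: "psum a l = cc + mm" using psum_l[OF l1 l2] by (simp add: cc_def mm_def)

lemma cm_le: "cc + mm \<le> nn" using pl psum_le_sum[of a l] by (simp add: nn_def)

lemma block_l: "block a l = {cc+1..cc+mm}" using pl by (simp add: block_def cc_def)

lemma block'_l: "block a' l = {cc+1..cc+mm+1}"
proof -
  have "psum a' (l - 1) = cc" using psum'_lt[of "l - 1"] l1 by (simp add: cc_def)
  moreover have "psum a' l = cc + mm + 1" using psum'_ge[of l] pl by simp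
  ultimately show ?thesis by (simp add: block_def)
qed

lemma block_other:
  assumes j: "j \<in> {1..length a}" "j \<noteq> l" and p: "p \<in> {cc+1..cc+mm+1}"
  shows "block a' j = insp p ` block a j"
proof (cases "j < l")
  case True
  have "j - 1 < l" using True by simp
  then have eq: "block a' j = block a j"
    using True psum'_lt[of "j - 1"] psum'_lt[of j] by (simp add: block_def)
  have "\<forall>x\<in>block a j. insp p x = x"
  proof
    fix x assume "x \<in> block a j"
    then have "x \<le> psum a j" by (simp add: block_def)
    also have "\<dots> \<le> cc" unfolding cc_def using True by (intro psum_mono) simp
    finally show "insp p x = x" using p by (simp add: insp_def)
  qed
  then have "insp p ` block a j = id ` block a j" by (intro image_cong) auto
  then have "insp p ` block a j = block a j" by simp
  then show ?thesis using eq by simp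
next
  case False
  then have gt: "j > l" using j by simp
  have "\<not> j - 1 < l" "\<not> j < l" using gt by simp_all
  then have eq: "block a' j = {psum a (j - 1) + 1 + 1 .. psum a j + 1}"
    using psum'_ge[of "j - 1"] psum'_ge[of j] by (simp add: block_def)
  have "\<forall>x\<in>block a j. insp p x = x + 1"
  proof
    fix x assume "x \<in> block a j"
    then have "psum a (j - 1) + 1 \<le> x" by (simp add: block_def)
    moreover have "psum a l \<le> psum a (j - 1)" using gt by (intro psum_mono) simp
    ultimately show "insp p x = x + 1" using p pl by (simp add: insp_def)
  qed
  then have "insp p ` block a j = (\<lambda>x. x + 1) ` block a j" by (intro image_cong) auto
  then show ?thesis using eq by (simp add: block_def)
qed

lemma good_unique: "good \<sigma> p \<Longrightarrow> good \<sigma> q \<Longrightarrow> p = q"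
proof (rule ccontr)
  assume gp: "good \<sigma> p" and gq: "good \<sigma> q" and ne: "p \<noteq> q"
  have *: False if "good \<sigma> p" "good \<sigma> q" "p < q" for p q
  proof -
    have "p \<in> {cc+1..cc+mm}" using that unfolding good_def by auto
    then have "\<sigma> p < p" "q \<le> \<sigma> p" using that unfolding good_def by auto
    then show False using that(3) by simp
  qed
  show False
  proof (cases "p < q")
    case True then show False using *[OF gp gq] by blast
  next
    case False then have "q < p" using ne by simp
    then show False using *[OF gq gp] by blast
  qed
qed

lemma Der_props:
  assumes "\<sigma> \<in> Der a"
  shows "\<sigma> permutes {1..nn}" "\<And>j. j \<in> {1..length a} \<Longrightarrow> dec \<sigma> (block a j)"
    "\<And>i. i \<in> {1..nn} \<Longrightarrow> \<sigma> i \<noteq> i"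
proof -
  have s: "\<sigma> \<in> Sa a" and f: "\<forall>i\<in>{1..sum_list a}. \<sigma> i \<noteq> i" using assms unfolding Der_def by blast+
  have "\<sigma> permutes {1..sum_list a} \<and> (\<forall>j\<in>{1..length a}. dec \<sigma> (block a j))"
    using Sa_alt[THEN iffD1, OF s] .
  then show "\<sigma> permutes {1..nn}" "\<And>j. j \<in> {1..length a} \<Longrightarrow> dec \<sigma> (block a j)"
    "\<And>i. i \<in> {1..nn} \<Longrightarrow> \<sigma> i \<noteq> i" using f unfolding nn_def by blast+
qed

lemma good_exists:
  assumes "\<sigma> \<in> Der a"
  shows "\<exists>p. good \<sigma> p"
proof -
  note D = Der_props[OF assms]
  have decl: "dec \<sigma> {cc+1..cc+mm}" using D(2)[of l] l1 l2 block_l by auto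
  define P where "P q \<longleftrightarrow> q \<in> {cc+1..cc+mm+1} \<and> (q = cc+mm+1 \<or> \<sigma> q < q)" for q
  define p where "p = (LEAST q. P q)"
  have ex: "P (cc+mm+1)" by (simp add: P_def)
  have Pp: "P p" unfolding p_def by (rule LeastI[of P, OF ex])
  have nP: "\<not> P q" if "q < p" for q using that unfolding p_def by (rule not_less_Least)
  have "good \<sigma> p"
    unfolding good_def
  proof (intro conjI ballI impI)
    show "p \<in> {cc+1..cc+mm+1}" using Pp by (simp add: P_def)
  next
    fix i assume i: "i \<in> {cc+1..cc+mm}" "i < p"
    have q: "p - 1 \<in> {cc+1..cc+mm}" using i Pp by (auto simp: P_def)
    have "\<not> P (p - 1)" using nP i by simp
    then have "p - 1 \<le> \<sigma> (p - 1)" using q by (auto simp: P_def)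
    moreover have "\<sigma> (p - 1) \<noteq> p - 1" using D(3) q cm_le by auto
    ultimately have a1: "p \<le> \<sigma> (p - 1)" by linarith
    show "p \<le> \<sigma> i"
    proof (cases "i = p - 1")
      case True then show ?thesis using a1 by simp
    next
      case False
      then have "i < p - 1" using i by simp
      then have "\<sigma> (p - 1) < \<sigma> i" using decD[OF decl _ q] i by blast
      then show ?thesis using a1 by simp
    qed
  next
    fix i assume i: "i \<in> {cc+1..cc+mm}" "p \<le> i"
    then have pb: "p \<in> {cc+1..cc+mm}" using Pp by (auto simp: P_def)
    then have a1: "\<sigma> p < p" using Pp by (auto simp: P_def)
    show "\<sigma> i < p"
    proof (cases "i = p")
      case True then show ?thesis using a1 by simp
    next
      case False
      then have "p < i" using i by simp
      then have "\<sigma> i < \<sigma> p" using decD[OF decl pb] i by blast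
      then show ?thesis using a1 by simp
    qed
  qed
  then show ?thesis by blast
qed

lemma Dhat_props:
  assumes "\<pi> \<in> Dhat l a'"
  shows "\<pi> permutes {1..nn+1}" "\<And>j. j \<in> {1..length a} \<Longrightarrow> dec \<pi> (block a' j)"
    "\<exists>p\<in>{cc+1..cc+mm+1}. \<pi> p = p"
    "\<And>j i. j \<in> {1..length a} \<Longrightarrow> j \<noteq> l \<Longrightarrow> i \<in> block a' j \<Longrightarrow> \<pi> i \<noteq> i"
proof -
  have s: "\<pi> \<in> Sa a'" and e: "\<exists>i\<in>block a' l. \<pi> i = i"
    and f: "\<forall>j\<in>{1..length a'}. j \<noteq> l \<longrightarrow> (\<forall>i\<in>block a' j. \<pi> i \<noteq> i)"
    using assms unfolding Dhat_def by blast+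
  have "\<pi> permutes {1..sum_list a'} \<and> (\<forall>j\<in>{1..length a'}. dec \<pi> (block a' j))"
    using Sa_alt[THEN iffD1, OF s] .
  then show "\<pi> permutes {1..nn+1}" "\<And>j. j \<in> {1..length a} \<Longrightarrow> dec \<pi> (block a' j)"
    unfolding sum_a' len_a' by blast+
  show "\<exists>p\<in>{cc+1..cc+mm+1}. \<pi> p = p" using e unfolding block'_l .
  show "\<And>j i. j \<in> {1..length a} \<Longrightarrow> j \<noteq> l \<Longrightarrow> i \<in> block a' j \<Longrightarrow> \<pi> i \<noteq> i"
    using f unfolding len_a' by blast
qed

lemma fix_unique:
  assumes "\<pi> \<in> Dhat l a'" "p \<in> {cc+1..cc+mm+1}" "q \<in> {cc+1..cc+mm+1}" "\<pi> p = p" "\<pi> q = q"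
  shows "p = q"
proof -
  have d: "dec \<pi> {cc+1..cc+mm+1}" using Dhat_props(2)[OF assms(1), of l] l1 l2 block'_l by auto
  show ?thesis
  proof (rule ccontr)
    assume "p \<noteq> q"
    then have "p < q \<or> q < p" by linarith
    then show False
    proof
      assume "p < q" then have "\<pi> q < \<pi> p" using decD[OF d assms(2,3)] by blast
      then show False using assms(4,5) \<open>p < q\<close> by simp
    next
      assume "q < p" then have "\<pi> p < \<pi> q" using decD[OF d assms(3,2)] by blast
      then show False using assms(4,5) \<open>q < p\<close> by simp
    qed
  qed
qed

lemma L3:
  assumes "\<sigma> \<in> Der a" "good \<sigma> p"
  shows "insmap nn p \<sigma> \<in> Dhat l a'"
proof -
  note D = Der_props[OF assms(1)]
  let ?\<pi> = "insmap nn p \<sigma>"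
  have p: "p \<in> {cc+1..cc+mm+1}" using assms(2) by (simp add: good_def)
  have p1: "p \<in> {1..nn+1}" using p cm_le by auto
  have perm: "?\<pi> permutes {1..nn+1}" by (rule ins_permutes[OF D(1) p1])
  have bsub: "block a j \<subseteq> {1..nn}" for j using block_sub[of a j] by (simp add: nn_def)
  have decl: "dec \<sigma> {cc+1..cc+mm}" using D(2)[of l] l1 l2 block_l by auto
  have pp: "?\<pi> p = p" by (simp add: insmap_def)
  have dec_l: "dec ?\<pi> {cc+1..cc+mm+1}"
    unfolding dec_def
  proof (intro ballI impI)
    fix x y assume x: "x \<in> {cc+1..cc+mm+1}" and y: "y \<in> {cc+1..cc+mm+1}" and xy: "x < y"
    have ev: "?\<pi> z = insp p (\<sigma> (stp p z))" if "z \<in> {cc+1..cc+mm+1}" "z \<noteq> p" for z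
      using that cm_le by (auto simp: insmap_def)
    have sr: "stp p z \<in> {cc+1..cc+mm}" if "z \<in> {cc+1..cc+mm+1}" "z \<noteq> p" for z
      using that p by (auto simp: stp_def)
    show "?\<pi> y < ?\<pi> x"
    proof (cases "x = p")
      case True
      then have "y \<noteq> p" using xy by simp
      then have "\<sigma> (stp p y) < p" using assms(2) sr[OF y] True xy
        unfolding good_def by (auto simp: stp_def)
      then show ?thesis using ev[OF y \<open>y \<noteq> p\<close>] True pp by (simp add: insp_def)
    next
      case xn: False
      show ?thesis
      proof (cases "y = p")
        case True
        have "stp p x = x" using xy True by (simp add: stp_def)
        then have "p \<le> \<sigma> (stp p x)" using assms(2) sr[OF x xn] True xy
          unfolding good_def by auto
        then show ?thesis using ev[OF x xn] True pp by (simp add: insp_def)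
      next
        case yn: False
        have "stp p x < stp p y" using stp_less xn yn xy by blast
        then have "\<sigma> (stp p y) < \<sigma> (stp p x)" using decD[OF decl sr[OF x xn] sr[OF y yn]] by blast
        then show ?thesis using ev[OF x xn] ev[OF y yn] by simp
      qed
    qed
  qed
  have "?\<pi> \<in> Sa a'"
    unfolding Sa_alt
  proof (intro conjI ballI)
    show "?\<pi> permutes {1..sum_list a'}" using perm sum_a' by simp
  next
    fix j assume j: "j \<in> {1..length a'}"
    show "dec ?\<pi> (block a' j)"
    proof (cases "j = l")
      case True then show ?thesis using dec_l block'_l by simp
    next
      case False
      have j': "j \<in> {1..length a}" using j len_a' by simp
      have "dec ?\<pi> (insp p ` block a j)" by (rule dec_ins[OF D(2)[OF j'] bsub])
      then show ?thesis using block_other[OF j' False p] by simp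
    qed
  qed
  moreover have "\<exists>i\<in>block a' l. ?\<pi> i = i" using pp p block'_l by auto
  moreover have "\<forall>j\<in>{1..length a'}. j \<noteq> l \<longrightarrow> (\<forall>i\<in>block a' j. ?\<pi> i \<noteq> i)"
  proof (intro ballI impI)
    fix j i assume j: "j \<in> {1..length a'}" "j \<noteq> l" and i: "i \<in> block a' j"
    then obtain x where x: "x \<in> block a j" "i = insp p x"
      using block_other[OF _ j(2) p] len_a' by auto
    then have xn: "x \<in> {1..nn}" using bsub[of j] by blast
    then have "?\<pi> i = insp p (\<sigma> x)" using x insmap_insp by simp
    then show "?\<pi> i \<noteq> i" using D(3)[OF xn] x by simp
  qed
  ultimately show ?thesis unfolding Dhat_def by blast
qed

lemma L4:
  assumes "\<pi> \<in> Dhat l a'" "p \<in> {cc+1..cc+mm+1}" "\<pi> p = p"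
  shows "delmap nn p \<pi> \<in> Der a" "good (delmap nn p \<pi>) p"
proof -
  note H = Dhat_props[OF assms(1)]
  let ?\<sigma> = "delmap nn p \<pi>"
  have p1: "p \<in> {1..nn+1}" using assms(2) cm_le by auto
  have inj: "inj \<pi>" using H(1) permutes_inj by blast
  have ne: "\<pi> (insp p i) \<noteq> p" for i using inj_ne[OF inj assms(3)] by simp
  have bsub: "block a j \<subseteq> {1..nn}" for j using block_sub[of a j] by (simp add: nn_def)
  have d': "dec \<pi> {cc+1..cc+mm+1}" using H(2)[of l] l1 l2 block'_l by auto
  have ev: "?\<sigma> i = stp p (\<pi> (insp p i))" if "i \<in> {1..nn}" for i
    using that by (simp add: delmap_def)
  have "?\<sigma> \<in> Sa a"
    unfolding Sa_alt
  proof (intro conjI ballI)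
    show "?\<sigma> permutes {1..sum_list a}" using del_permutes[OF H(1) assms(3) p1] by (simp add: nn_def)
  next
    fix j assume j: "j \<in> {1..length a}"
    show "dec ?\<sigma> (block a j)"
    proof (cases "j = l")
      case True
      have "insp p ` block a l \<subseteq> {cc+1..cc+mm+1}" using block_l by (auto simp: insp_def)
      then have "dec \<pi> (insp p ` block a l)" using d' dec_mono by blast
      then show ?thesis using True dec_del[OF _ inj assms(3) bsub] by simp
    next
      case False
      then show ?thesis using block_other[OF j False assms(2)] H(2)[OF j] dec_del[OF _ inj assms(3) bsub]
        by simp
    qed
  qed
  moreover have "\<forall>i\<in>{1..sum_list a}. ?\<sigma> i \<noteq> i"
  proof (intro ballI notI)
    fix i assume i: "i \<in> {1..sum_list a}" and fx: "?\<sigma> i = i"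
    then have i': "i \<in> {1..nn}" by (simp add: nn_def)
    have "\<pi> (insp p i) = insp p (?\<sigma> i)" using ev[OF i'] ne by simp
    then have fp: "\<pi> (insp p i) = insp p i" using fx by simp
    obtain j where j: "j \<in> {1..length a}" "i \<in> block a j" using block_cover[OF i] by blast
    show False
    proof (cases "j = l")
      case True
      then have "insp p i \<in> {cc+1..cc+mm+1}" using j block_l by (auto simp: insp_def)
      then show False using fix_unique[OF assms(1) _ assms(2) fp assms(3)] by simp
    next
      case False
      then have "insp p i \<in> block a' j" using block_other[OF j(1) False assms(2)] j(2) by simp
      then show False using H(4)[OF j(1) False] fp by blast
    qed
  qed
  ultimately show "?\<sigma> \<in> Der a" unfolding Der_def by blast
  show "good ?\<sigma> p"
    unfolding good_def
  proof (intro conjI ballI impI)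
    show "p \<in> {cc+1..cc+mm+1}" by (rule assms(2))
  next
    fix i assume i: "i \<in> {cc+1..cc+mm}" "i < p"
    then have "?\<sigma> i = stp p (\<pi> i)" using ev[of i] cm_le by (simp add: insp_def)
    moreover have "\<pi> p < \<pi> i"
    proof -
      have "i \<in> {cc+1..cc+mm+1}" using i by simp
      then show ?thesis using decD[OF d' _ assms(2)] i(2) by blast
    qed
    ultimately show "p \<le> ?\<sigma> i" using assms(3) by (simp add: stp_def)
  next
    fix i assume i: "i \<in> {cc+1..cc+mm}" "p \<le> i"
    then have "?\<sigma> i = stp p (\<pi> (i + 1))" using ev[of i] cm_le by (simp add: insp_def)
    moreover have "\<pi> (i + 1) < \<pi> p"
    proof -
      have "i + 1 \<in> {cc+1..cc+mm+1}" "p < i + 1" using i by simp_all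
      then show ?thesis using decD[OF d' assms(2)] by blast
    qed
    ultimately show "?\<sigma> i < p" using assms(3) by (simp add: stp_def)
  qed
qed

lemma bij_main: "\<exists>f. bij_betw f (Der a) (Dhat l a')"
proof -
  define F where "F \<sigma> = insmap nn (THE p. good \<sigma> p) \<sigma>" for \<sigma>
  define G where "G \<pi> = delmap nn (THE p. p \<in> {cc+1..cc+mm+1} \<and> \<pi> p = p) \<pi>" for \<pi>
  have gT: "good \<sigma> (THE p. good \<sigma> p)" if s: "\<sigma> \<in> Der a" for \<sigma>
  proof -
    obtain p where gp: "good \<sigma> p" using good_exists[OF s] by blast
    then show ?thesis
    proof (rule theI)
      fix q assume "good \<sigma> q" then show "q = p" using gp by (rule good_unique)
    qed
  qed
  have fT: "(THE p. p \<in> {cc+1..cc+mm+1} \<and> \<pi> p = p) \<in> {cc+1..cc+mm+1} \<and>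
       \<pi> (THE p. p \<in> {cc+1..cc+mm+1} \<and> \<pi> p = p) = (THE p. p \<in> {cc+1..cc+mm+1} \<and> \<pi> p = p)"
    if t: "\<pi> \<in> Dhat l a'" for \<pi>
  proof -
    obtain p where "p \<in> {cc+1..cc+mm+1} \<and> \<pi> p = p" using Dhat_props(3)[OF t] by blast
    then show ?thesis
    proof (rule theI)
      fix q assume "q \<in> {cc+1..cc+mm+1} \<and> \<pi> q = q"
      then show "q = p" using fix_unique[OF t] \<open>p \<in> {cc+1..cc+mm+1} \<and> \<pi> p = p\<close> by blast
    qed
  qed
  show ?thesis
  proof (intro exI bij_betwI)
    show "F \<in> Der a \<rightarrow> Dhat l a'"
    proof
      fix \<sigma> assume "\<sigma> \<in> Der a"
      then show "F \<sigma> \<in> Dhat l a'" unfolding F_def using L3 gT by blast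
    qed
    show "G \<in> Dhat l a' \<rightarrow> Der a"
    proof
      fix \<pi> assume t: "\<pi> \<in> Dhat l a'"
      show "G \<pi> \<in> Der a" unfolding G_def using L4(1)[OF t] fT[OF t] by blast
    qed
  next
    fix \<sigma> assume s: "\<sigma> \<in> Der a"
    define p where "p = (THE p. good \<sigma> p)"
    have gp: "good \<sigma> p" using gT[OF s] by (simp add: p_def)
    have pr: "p \<in> {cc+1..cc+mm+1}" using gp by (simp add: good_def)
    have Fs: "F \<sigma> = insmap nn p \<sigma>" by (simp add: F_def p_def)
    have inD: "F \<sigma> \<in> Dhat l a'" using L3[OF s gp] Fs by simp
    have "F \<sigma> p = p" using Fs by (simp add: insmap_def)
    then have "(THE q. q \<in> {cc+1..cc+mm+1} \<and> F \<sigma> q = q) = p"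
      using pr fix_unique[OF inD] by (intro the_equality) auto
    then show "G (F \<sigma>) = \<sigma>" using Fs del_ins Der_props(1)[OF s] by (simp add: G_def)
  next
    fix \<pi> assume t: "\<pi> \<in> Dhat l a'"
    define p where "p = (THE p. p \<in> {cc+1..cc+mm+1} \<and> \<pi> p = p)"
    have pp: "p \<in> {cc+1..cc+mm+1}" "\<pi> p = p" using fT[OF t] by (simp_all add: p_def)
    have Gt: "G \<pi> = delmap nn p \<pi>" by (simp add: G_def p_def)
    have "good (G \<pi>) p" using L4(2)[OF t pp] Gt by simp
    then have "(THE q. good (G \<pi>) q) = p" using good_unique by (intro the_equality) auto
    moreover have "p \<in> {1..nn+1}" using pp cm_le by auto
    ultimately show "F (G \<pi>) = \<pi>"
      using Gt ins_del[OF Dhat_props(1)[OF t] pp(2)] by (simp add: F_def)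
  qed
qed

end

theorem mainTheorem10:
  fixes a :: "nat list" and l :: nat
  assumes "1 \<le> l" and "l \<le> length a"
  shows "\<exists>f. bij_betw f (Der a) (Dhat l (a[l - 1 := a ! (l - 1) + 1]))"
  using bij_main[OF assms] by (simp add: a'_def[OF assms])

end
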